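(* Let $f$ be a strategy-proof and non-bossy allocation mechanism over a basic categorized domain with $p\geq 2$. For any profile $P=(R_1,\ldots,R_n)$, any agent $j$, any bundle $\vec d$, and any linear order $R_j'$ that is a pushup of $\vec d$ from $R_j$, either $f(R_j',R_{-j})=f(P)$ or $f^j(R_j',R_{-j})=\vec d$.
   Context: Basic categorized domain: $n$ agents $\{1,\ldots,n\}$, $p$ categories $D_i=\{1,\ldots,n\}$ of indivisible items, bundles $\mathfrak D=D_1\times\cdots\times D_p$, $[\vec d]_i$ the $i$-th component. Each agent $j$ has a linear order $R_j$ over $\mathfrak D$; a profile is $P=(R_1,\ldots,R_n)$ and $(R_j',R_{-j})$ replaces $R_j$ by $R_j'$. An allocation is a map $A:\{1,\ldots,n\}\to\mathfrak D$ with $\{[A(1)]_i,\ldots,[A(n)]_i\}=D_i$ for each $i$. An allocation mechanism $f$ maps profiles to allocations; $f^j(P)$ is agent $j$'s bundle. Strategy-proofness: for all $P,j,R_j'$, $f^j(P)$ is ranked weakly above $f^j(R_j',R_{-j})$ in $R_j$. Non-bossiness: for all $P,j,R_j'$, if $f^j(P)=f^j(R_j',R_{-j})$ then $f(P)=f(R_j',R_{-j})$. A linear order $R'$ is a pushup of $\vec d$ from $R$ if $R'$ is obtained from $R$ by raising the position of $\vec d$ while keeping the relative order of all other bundles unchanged. *)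

theory Defs
  imports Main
begin

(* Agents are the elements of the finite type 'a (n = CARD('a)).
   Categories are the elements of the finite type 'c (p = CARD('c)).
   Every category D_i consists of n items, identified with the elements of 'a. *)

type_synonym ('c,'a) bndl = "'c \<Rightarrow> 'a"

(* A preference: linear order on all bundles; (x,y) \<in> R means x is ranked weakly above y. *)
definition is_pref :: "('c,'a) bndl rel \<Rightarrow> bool" where
  "is_pref R \<longleftrightarrow> linear_order_on UNIV R"

definition is_profile :: "('a \<Rightarrow> ('c,'a) bndl rel) \<Rightarrow> bool" where
  "is_profile P \<longleftrightarrow> (\<forall>j. is_pref (P j))"

definition is_allocation :: "('a \<Rightarrow> ('c,'a) bndl) \<Rightarrow> bool" where
  "is_allocation A \<longleftrightarrow> (\<forall>i. (\<lambda>j. A j i) ` UNIV = UNIV)"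

definition is_mechanism ::
  "(('a \<Rightarrow> ('c,'a) bndl rel) \<Rightarrow> ('a \<Rightarrow> ('c,'a) bndl)) \<Rightarrow> bool" where
  "is_mechanism f \<longleftrightarrow> (\<forall>P. is_profile P \<longrightarrow> is_allocation (f P))"

definition strategy_proof ::
  "(('a \<Rightarrow> ('c,'a) bndl rel) \<Rightarrow> ('a \<Rightarrow> ('c,'a) bndl)) \<Rightarrow> bool" where
  "strategy_proof f \<longleftrightarrow>
     (\<forall>P j R'. is_profile P \<longrightarrow> is_pref R' \<longrightarrow> (f P j, f (P(j := R')) j) \<in> P j)"

definition non_bossy ::
  "(('a \<Rightarrow> ('c,'a) bndl rel) \<Rightarrow> ('a \<Rightarrow> ('c,'a) bndl)) \<Rightarrow> bool" where
  "non_bossy f \<longleftrightarrow>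
     (\<forall>P j R'. is_profile P \<longrightarrow> is_pref R' \<longrightarrow>
        f P j = f (P(j := R')) j \<longrightarrow> f P = f (P(j := R')))"

definition pushup :: "('c,'a) bndl rel \<Rightarrow> ('c,'a) bndl \<Rightarrow> ('c,'a) bndl rel \<Rightarrow> bool" where
  "pushup R d R' \<longleftrightarrow> is_pref R \<and> is_pref R' \<and> R' \<noteq> R \<and>
     (\<forall>x y. x \<noteq> d \<longrightarrow> y \<noteq> d \<longrightarrow> ((x, y) \<in> R' \<longleftrightarrow> (x, y) \<in> R)) \<and>
     (\<forall>x. (d, x) \<in> R \<longrightarrow> (d, x) \<in> R')"

end

theory Submission
  imports Defs
begin

theorem lemma2:
  fixes f :: "('a::finite \<Rightarrow> ('c::finite \<Rightarrow> 'a) rel) \<Rightarrow> ('a \<Rightarrow> ('c \<Rightarrow> 'a))"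
    and P :: "'a \<Rightarrow> ('c \<Rightarrow> 'a) rel"
    and j :: 'a and d :: "'c \<Rightarrow> 'a" and R' :: "('c \<Rightarrow> 'a) rel"
  assumes "card (UNIV :: 'c set) \<ge> 2"
    and "is_mechanism f" and "strategy_proof f" and "non_bossy f"
    and "is_profile P"
    and "pushup (P j) d R'"
  shows "f (P(j := R')) = f P \<or> f (P(j := R')) j = d"
proof -
  define Q where "Q = P(j := R')"
  have pu: "is_pref (P j)" "is_pref R'"
    "\<forall>x y. x \<noteq> d \<longrightarrow> y \<noteq> d \<longrightarrow> ((x, y) \<in> R' \<longleftrightarrow> (x, y) \<in> P j)"
    "\<forall>x. (d, x) \<in> P j \<longrightarrow> (d, x) \<in> R'"
    using assms(6) unfolding pushup_def by auto
  have profQ: "is_profile Q" using assms(5) pu(2) unfolding Q_def is_profile_def by auto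
  have backeq: "Q(j := P j) = P" unfolding Q_def by auto
  have s1: "(f P j, f Q j) \<in> P j" using assms(3,5) pu(2) unfolding strategy_proof_def Q_def by blast
  have s2: "(f Q j, f P j) \<in> R'"
    using assms(3) profQ pu(1) backeq unfolding strategy_proof_def
    by (metis Q_def fun_upd_same)
  have aR: "antisym (P j)" "antisym R'" using pu(1,2)
    unfolding is_pref_def linear_order_on_def partial_order_on_def by auto
  show ?thesis
  proof (cases "f Q j = d")
    case True then show ?thesis unfolding Q_def by simp
  next
    case False
    have eq: "f P j = f Q j"
    proof (cases "f P j = d")
      case True
      then have "(d, f Q j) \<in> R'" using s1 pu(4) by auto
      then have "f Q j = d" using s2 True aR(2) by (auto dest: antisymD)
      then show ?thesis using False by simp
    next
      case F2: False
      then have "(f Q j, f P j) \<in> P j" using s2 pu(3) False by auto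
      then show ?thesis using s1 aR(1) by (auto dest: antisymD)
    qed
    have "f P = f Q" using assms(4,5) pu(2) eq unfolding non_bossy_def Q_def by blast
    then show ?thesis unfolding Q_def by simp
  qed
qed

end
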